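(* Let $n\ge2$. The limit set $\Lambda\subset\mathrm{Iso}_2(\mathbb R^{2n},\omega_h)$ associated to $\mathrm{SU}(n-1,1)\subset\mathrm{Sp}(\omega_h)$, namely the set of complex lines $L\subset\mathbb C^n$ with $h|_{L}\equiv0$, viewed as real $2$-planes in $\mathbb R^{2n}$ (a space homeomorphic to $S^{2n-3}$), is maximally antipodal in $\mathrm{Iso}_2(\mathbb R^{2n},\omega_h)$.
   Context: $h(u,v)=\overline u^TQv$ is the Hermitian form on $\mathbb C^n$ of signature $(n-1,1)$ with $Qe_1=e_n$, $Qe_n=e_1$, $Qe_k=e_k$ for $1<k<n$; $\mathrm{SU}(n-1,1)$ is the subgroup of $\mathrm{SL}(n,\mathbb C)$ preserving $h$. $\mathbb C^n$ is identified with $\mathbb R^{2n}$ via $(x_1+iy_1,\dots,x_n+iy_n)\mapsto(x_1,y_1,\dots,x_n,y_n)$, and $\omega_h=\mathrm{Im}\,h$ is a real symplectic form preserved by $\mathrm{SU}(n-1,1)$; $\mathrm{Sp}(\omega_h)$ is its symmetry group. $\mathrm{Iso}_2(\mathbb R^{2n},\omega_h)$ is the space of $\omega_h$-isotropic real $2$-planes; $V,W$ are antipodal iff $V\oplus W^{\perp_{\omega_h}}=\mathbb R^{2n}$. A subset is maximally antipodal if its distinct points are pairwise antipodal and every point of the ambient space is non-antipodal to at least one of its points. ($\Lambda$ is the flag limit set of the rank one subgroup $\mathrm{SU}(n-1,1)$ in $\mathrm{Iso}_2$, equal to the limit set of any uniform lattice of $\mathrm{SU}(n-1,1)$.) *)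

theory Defs
  imports "HOL-Analysis.Analysis"
begin

text \<open>C^n is modelled as complex^('n::{finite,wellorder}), with the index type 'n finite and well-ordered:
  its least element plays the role of index 1, its greatest that of index n.
  complex^'n is a Euclidean (real) space of dimension 2n; its real structure is exactly
  the identification C^n = R^{2n}.\<close>

definition idx_first :: "'n::{finite,wellorder}" where
  "idx_first = (LEAST i. True)"

definition idx_last :: "'n::{finite,wellorder}" where
  "idx_last = (GREATEST i. True)"

definition Qperm :: "('n::{finite,wellorder}) \<Rightarrow> ('n::{finite,wellorder})" where
  "Qperm i = (if i = idx_first then idx_last else if i = idx_last then idx_first else i)"

definition Qmat :: "complex^('n::{finite,wellorder})^('n::{finite,wellorder})" where
  "Qmat = (\<chi> i j. if j = Qperm i then 1 else 0)"

definition herm :: "complex^('n::{finite,wellorder}) \<Rightarrow> complex^('n::{finite,wellorder}) \<Rightarrow> complex" where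
  "herm u v = (\<Sum>i\<in>UNIV. cnj (u $ i) * ((Qmat *v v) $ i))"

definition omega_h :: "complex^('n::{finite,wellorder}) \<Rightarrow> complex^('n::{finite,wellorder}) \<Rightarrow> real" where
  "omega_h u v = Im (herm u v)"

definition omega_isotropic :: "(complex^('n::{finite,wellorder})) set \<Rightarrow> bool" where
  "omega_isotropic V \<longleftrightarrow> (\<forall>u\<in>V. \<forall>v\<in>V. omega_h u v = 0)"

definition Iso2 :: "(complex^('n::{finite,wellorder})) set set" where
  "Iso2 = {V. subspace V \<and> dim V = 2 \<and> omega_isotropic V}"

definition omega_perp :: "(complex^('n::{finite,wellorder})) set \<Rightarrow> (complex^('n::{finite,wellorder})) set" where
  "omega_perp W = {u. \<forall>w\<in>W. omega_h u w = 0}"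

definition direct_sum_UNIV :: "('a::real_vector) set \<Rightarrow> 'a set \<Rightarrow> bool" where
  "direct_sum_UNIV V U \<longleftrightarrow> V \<inter> U = {0} \<and> {x + y | x y. x \<in> V \<and> y \<in> U} = UNIV"

definition antipodal :: "(complex^('n::{finite,wellorder})) set \<Rightarrow> (complex^('n::{finite,wellorder})) set \<Rightarrow> bool" where
  "antipodal V W \<longleftrightarrow> direct_sum_UNIV V (omega_perp W)"

definition maximally_antipodal ::
  "(complex^('n::{finite,wellorder})) set set \<Rightarrow> (complex^('n::{finite,wellorder})) set set \<Rightarrow> bool" where
  "maximally_antipodal X S \<longleftrightarrow>
     S \<subseteq> X \<and>
     (\<forall>V\<in>S. \<forall>W\<in>S. V \<noteq> W \<longrightarrow> antipodal V W) \<and>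
     (\<forall>V\<in>X. \<exists>W\<in>S. \<not> antipodal V W)"

definition complex_lines :: "(complex^('n::{finite,wellorder})) set set" where
  "complex_lines = {L. \<exists>v. v \<noteq> 0 \<and> L = range (\<lambda>c::complex. c *s v)}"

definition LimitSet :: "(complex^('n::{finite,wellorder})) set set" where
  "LimitSet = {L \<in> complex_lines. \<forall>u\<in>L. \<forall>v\<in>L. herm u v = 0}"

end

theory Submission
  imports Defs
begin


lemma Qmat_mult: "(Qmat *v v) $ i = v $ Qperm i"
proof -
  have "(Qmat *v v) $ i = (\<Sum>j\<in>UNIV. (if j = Qperm i then v $ j else 0))"
  proof -
    have e: "\<And>j. (if j = Qperm i then 1 else 0) * v $ j = (if j = Qperm i then v$j else 0)" by simp
    show ?thesis by (simp only: matrix_vector_mult_def Qmat_def vec_lambda_beta e)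
  qed
  thus ?thesis by simp
qed

lemma herm_alt: "herm u v = (\<Sum>i\<in>UNIV. cnj (u $ i) * v $ Qperm i)"
  by (simp add: herm_def Qmat_mult)

lemma Qperm_Qperm[simp]: "Qperm (Qperm i) = i"
  by (auto simp: Qperm_def)

lemma sum_Qperm: "(\<Sum>i\<in>UNIV. g (Qperm i)) = (\<Sum>i\<in>UNIV. g i)"
  by (rule sum.reindex_bij_witness[where i=Qperm and j=Qperm]) auto

lemma herm_sym: "herm v u = cnj (herm u v)"
proof -
  have "herm v u = (\<Sum>i\<in>UNIV. cnj (v $ Qperm i) * u $ Qperm (Qperm i))"
    unfolding herm_alt by (rule sum_Qperm[symmetric])
  also have "\<dots> = cnj (herm u v)" unfolding herm_alt
    by (simp add: mult.commute)
  finally show ?thesis .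
qed

lemma herm_self_real: "herm x x = complex_of_real (Re (herm x x))"
  using herm_sym[of x x] by (simp add: complex_eq_iff)

lemma herm_add_left[simp]: "herm (u + w) v = herm u v + herm w v"
  by (simp add: herm_alt sum.distrib algebra_simps)
lemma herm_add_right[simp]: "herm u (v + w) = herm u v + herm u w"
  by (simp add: herm_alt sum.distrib algebra_simps)
lemma herm_diff_left[simp]: "herm (u - w) v = herm u v - herm w v"
  by (simp add: herm_alt sum_subtractf algebra_simps)
lemma herm_diff_right[simp]: "herm u (v - w) = herm u v - herm u w"
  by (simp add: herm_alt sum_subtractf algebra_simps)
lemma herm_smult_left[simp]: "herm (c *s u) v = cnj c * herm u v"
  by (simp add: herm_alt sum_distrib_left algebra_simps)
lemma herm_smult_right[simp]: "herm u (c *s v) = c * herm u v"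
  by (simp add: herm_alt sum_distrib_left algebra_simps)
lemma herm_zero_left[simp]: "herm 0 v = 0"
  by (simp add: herm_alt)
lemma herm_zero_right[simp]: "herm u 0 = 0"
  by (simp add: herm_alt)

lemma scaleR_smult: "r *\<^sub>R (v::complex^'n) = complex_of_real r *s v"
unfolding vec_eq_iff proof
  fix i
  have "(r *\<^sub>R v)$i = r *\<^sub>R (v$i)" by (rule vector_scaleR_component)
  thus "(r *\<^sub>R v)$i = (complex_of_real r *s v) $ i"
    by (metis scaleR_conv_of_real vector_smult_component)
qed

lemma herm_K:
  assumes "z $ idx_first = z $ idx_last"
  shows "herm z z = complex_of_real (\<Sum>i\<in>UNIV. (cmod (z $ i))^2)"
proof -
  have q: "z $ Qperm i = z $ i" for i using assms by (auto simp: Qperm_def)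
  have "herm z z = (\<Sum>i\<in>UNIV. cnj (z $ i) * z $ i)" by (simp add: herm_alt q)
  also have "\<dots> = (\<Sum>i\<in>UNIV. complex_of_real ((cmod (z $ i))^2))"
    by (rule sum.cong, simp, subst complex_norm_square, simp add: mult.commute)
  finally show ?thesis by simp
qed

lemma herm_K0:
  assumes "z $ idx_first = z $ idx_last" "Re (herm z z) \<le> 0"
  shows "z = 0"
proof -
  let ?S = "\<Sum>i\<in>UNIV. (cmod (z $ i))^2"
  have "Re (herm z z) = ?S" by (simp only: herm_K[OF assms(1)] Re_complex_of_real)
  hence "?S \<le> 0" using assms by simp
  hence "?S = 0" by (simp add: antisym sum_nonneg)
  hence "\<forall>i\<in>UNIV. (cmod (z $ i))^2 = 0" by (subst (asm) sum_nonneg_eq_0_iff) auto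
  thus ?thesis by (simp add: vec_eq_iff)
qed

lemma herm_K_nonneg:
  assumes "z $ idx_first = z $ idx_last"
  shows "Re (herm z z) \<ge> 0"
proof -
  have "Re (herm z z) = (\<Sum>i\<in>UNIV. (cmod (z $ i))^2)" by (simp only: herm_K[OF assms(1)] Re_complex_of_real)
  thus ?thesis by (simp add: sum_nonneg)
qed

definition qf :: "complex^('n::{finite,wellorder}) \<Rightarrow> complex" where
  "qf z = z $ idx_first - z $ idx_last"

lemma qtrick:
  fixes x y :: "complex^('n::{finite,wellorder})"
  defines "z \<equiv> qf y *s x - qf x *s y"
  shows "z $ idx_first = z $ idx_last"
    and "herm z z = cnj (qf y) * qf y * herm x x - cnj (qf y) * qf x * herm x y
            - cnj (qf x) * qf y * herm y x + cnj (qf x) * qf x * herm y y"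
  unfolding z_def
  by (auto simp: qf_def algebra_simps)



lemma first_ne_last:
  assumes "CARD('n::{finite,wellorder}) \<ge> 2"
  shows "(idx_first::'n) \<noteq> idx_last"
proof
  assume eq: "(idx_first::'n) = idx_last"
  have gl: "(idx_last::'n) = Max UNIV"
    unfolding idx_last_def by (rule Greatest_equality) auto
  have "\<forall>i::'n. i = idx_first"
  proof
    fix i :: 'n
    have "idx_first \<le> i" unfolding idx_first_def by (rule Least_le) simp
    moreover have "i \<le> idx_last" unfolding gl by simp
    ultimately show "i = idx_first" using eq by simp
  qed
  hence "(UNIV::'n set) = {idx_first}" by auto
  hence "card (UNIV::'n set) = card {idx_first::'n}" by (rule arg_cong)
  hence "CARD('n) = 1" by simp
  thus False using assms by simp
qed

lemma reCC: "Re (cnj c * c * w) = (cmod c)^2 * Re w"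
proof -
  have "cnj c * c = complex_of_real ((cmod c)^2)" by (metis complex_norm_square mult.commute)
  thus ?thesis by simp
qed

lemma qf_nz:
  assumes "Re (herm y y) \<le> 0" "y \<noteq> 0"
  shows "qf y \<noteq> 0"
  using herm_K0[of y] assms by (auto simp: qf_def)

lemma null_dep:
  assumes "herm x x = 0" "herm y y = 0" "herm x y = 0" "y \<noteq> 0"
  shows "\<exists>c. x = c *s y"
proof -
  have qy: "qf y \<noteq> 0" using qf_nz[of y] assms by simp
  have yx: "herm y x = 0" using assms(3) herm_sym[of x y] by simp
  let ?z = "qf y *s x - qf x *s y"
  have hz: "herm ?z ?z = 0" by (simp add: assms yx)
  have "?z = 0" by (rule herm_K0[OF qtrick(1)]) (simp only: hz zero_complex.sel order_refl)
  hence e: "qf y *s x = qf x *s y" by simp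
  have "x = (qf x / qf y) *s y"
  proof (unfold vec_eq_iff, intro allI)
    fix i
    have "qf y * x $ i = qf x * y $ i" using e by (metis vector_smult_component)
    thus "x $ i = (qf x / qf y *s y) $ i" using qy by (simp add: field_simps)
  qed
  thus ?thesis by blast
qed

lemma timelike:
  assumes "Re (herm a a) < 0" "herm a y = 0" "y \<noteq> 0"
  shows "Re (herm y y) > 0"
proof (rule ccontr)
  assume neg: "\<not> Re (herm y y) > 0"
  have qy: "qf y \<noteq> 0" using qf_nz[of y] assms neg by simp
  have ya: "herm y a = 0" using assms(2) herm_sym[of a y] by simp
  let ?z = "qf y *s a - qf a *s y"
  have "herm ?z ?z = cnj (qf y) * qf y * herm a a + cnj (qf a) * qf a * herm y y"
    using qtrick(2)[of a y] assms ya by simp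
  hence "Re (herm ?z ?z) = (cmod (qf y))^2 * Re (herm a a) + (cmod (qf a))^2 * Re (herm y y)"
    by (simp only: plus_complex.sel reCC)
  moreover have "(cmod (qf y))^2 * Re (herm a a) < 0" using qy assms(1)
    by (simp add: mult_pos_neg)
  moreover have "(cmod (qf a))^2 * Re (herm y y) \<le> 0" using neg
    by (simp add: mult_nonneg_nonpos)
  moreover have "Re (herm ?z ?z) \<ge> 0" by (rule herm_K_nonneg[OF qtrick(1)])
  ultimately show False by linarith
qed



lemma recnj: "r > 0 \<Longrightarrow> Re (cnj (w / complex_of_real r) * w) \<ge> 0"
proof -
  assume r: "r > 0"
  have "cnj (w / complex_of_real r) * w = complex_of_real ((cmod w)^2 / r)"
  proof -
    have "cnj (w / complex_of_real r) * w = (w * cnj w) / complex_of_real r" by (simp add: mult.commute)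
    also have "\<dots> = complex_of_real ((cmod w)^2) / complex_of_real r" by (simp only: complex_norm_square)
    finally show ?thesis by simp
  qed
  thus ?thesis using r by simp
qed

definition uvec :: "complex^('n::{finite,wellorder})" where
  "uvec = (\<chi> i. if i = idx_first then 1 else if i = idx_last then -1 else 0)"

lemma uvec_neg:
  assumes ne: "(idx_first::'n) \<noteq> idx_last"
  shows "Re (herm (uvec::complex^('n::{finite,wellorder})) uvec) < 0"
proof -
  have q: "(uvec::(complex,'n) vec) $ Qperm i = - uvec $ i" for i
    using ne by (auto simp: uvec_def Qperm_def)
  have "herm (uvec::(complex,'n) vec) uvec = - (\<Sum>i\<in>UNIV. cnj ((uvec::(complex,'n) vec) $ i) * (uvec::(complex,'n) vec) $ i)"
    by (simp add: herm_alt q sum_negf)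
  also have "\<dots> = - complex_of_real (\<Sum>i\<in>UNIV. (cmod ((uvec::(complex,'n) vec) $ i))^2)"
    by (simp only: of_real_sum, rule arg_cong[where f=uminus], rule sum.cong, simp,
        subst complex_norm_square, simp add: mult.commute)
  finally have e: "Re (herm (uvec::(complex,'n) vec) uvec) = - (\<Sum>i\<in>UNIV. (cmod ((uvec::(complex,'n) vec) $ i))^2)"
    by simp
  have "(cmod ((uvec::(complex,'n) vec) $ idx_first))^2 \<le> (\<Sum>i\<in>UNIV. (cmod ((uvec::(complex,'n) vec) $ i))^2)"
    by (rule member_le_sum) auto
  moreover have "(uvec::(complex,'n) vec) $ idx_first = 1" by (simp add: uvec_def)
  ultimately show ?thesis using e by simp
qed

lemma herm_ofreal_self:
  "herm (complex_of_real a *s x + complex_of_real b *s y) (complex_of_real a *s x + complex_of_real b *s y)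
   = complex_of_real (a^2) * herm x x + complex_of_real (a*b) * (herm x y + herm y x) + complex_of_real (b^2) * herm y y"
  by (simp add: algebra_simps power2_eq_square)

lemma main3:
  fixes V :: "(complex^('n::{finite,wellorder})) set"
  assumes card: "(idx_first::'n) \<noteq> idx_last" and V: "subspace V" and vV: "v \<in> V" and xV: "x \<in> V"
    and x0: "x \<noteq> 0" and vpos: "Re (herm v v) > 0" and vx: "herm v x = 0"
  shows "\<exists>p\<in>V. p \<noteq> 0 \<and> (\<exists>w. w \<noteq> 0 \<and> herm w w = 0 \<and> herm p w = 0)"
proof -
  define X where "X = Re (herm x x)"
  define Vv where "Vv = Re (herm v v)"
  have hx: "herm x x = complex_of_real X" unfolding X_def by (rule herm_self_real)
  have hv: "herm v v = complex_of_real Vv" unfolding Vv_def by (rule herm_self_real)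
  have xv: "herm x v = 0" using vx herm_sym[of v x] by simp
  have Vp: "Vv > 0" using vpos Vv_def by simp
  consider "X = 0" | "X < 0" | "X > 0" by linarith
  thus ?thesis
  proof cases
    case 1
    thus ?thesis using xV x0 hx by (intro bexI[of _ x]) auto
  next
    case 2
    define s1 where "s1 = sqrt (- X)"
    define s2 where "s2 = sqrt Vv"
    define p where "p = complex_of_real s1 *s v + complex_of_real s2 *s x"
    have pV: "p \<in> V" unfolding p_def scaleR_smult[symmetric]
      using V vV xV by (simp add: subspace_add subspace_scale)
    have s1sq: "s1^2 = -X" unfolding s1_def using 2 by simp
    have s2sq: "s2^2 = Vv" unfolding s2_def using Vp by simp
    have "herm p p = complex_of_real (s1^2 * Vv + s2^2 * X)"
      unfolding p_def herm_ofreal_self hv hx vx xv by simp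
    hence pp: "herm p p = 0" using s1sq s2sq by simp
    have "herm v p = complex_of_real (s1 * Vv)" unfolding p_def by (simp add: hv vx)
    moreover have "s1 * Vv \<noteq> 0" unfolding s1_def using 2 Vp by simp
    ultimately have "p \<noteq> 0" by auto
    thus ?thesis using pV pp by (intro bexI[of _ p]) auto
  next
    case 3
    define u where "u = (uvec::(complex,'n) vec)"
    have uneg: "Re (herm u u) < 0" unfolding u_def by (rule uvec_neg[OF card])
    define \<alpha> where "\<alpha> = herm v u / complex_of_real Vv"
    define \<beta> where "\<beta> = herm x u / complex_of_real X"
    define t where "t = u - \<alpha> *s v - \<beta> *s x"
    have vt: "herm v t = 0" unfolding t_def \<alpha>_def using Vp by (simp add: hv vx)
    have xt: "herm x t = 0" unfolding t_def \<beta>_def using 3 by (simp add: hx xv)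
    have tv: "herm t v = 0" using vt herm_sym[of v t] by simp
    have tx: "herm t x = 0" using xt herm_sym[of x t] by simp
    have e1: "herm t (u - \<alpha> *s v - \<beta> *s x) = herm t u - \<alpha> * herm t v - \<beta> * herm t x" by simp
    hence "herm t t = herm t u - \<alpha> * herm t v - \<beta> * herm t x" unfolding t_def[symmetric] .
    hence "herm t t = herm t u" using tv tx by simp
    also have "\<dots> = herm u u - cnj \<alpha> * herm v u - cnj \<beta> * herm x u" unfolding t_def by simp
    finally have tt: "Re (herm t t) = Re (herm u u) - Re (cnj \<alpha> * herm v u) - Re (cnj \<beta> * herm x u)"
      by simp
    have "Re (cnj \<alpha> * herm v u) \<ge> 0" unfolding \<alpha>_def by (rule recnj[OF Vp])
    moreover have "Re (cnj \<beta> * herm x u) \<ge> 0" unfolding \<beta>_def by (rule recnj) (use 3 in simp)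
    ultimately have Tn: "Re (herm t t) < 0" using tt uneg by linarith
    define T where "T = Re (herm t t)"
    have ht: "herm t t = complex_of_real T" unfolding T_def by (rule herm_self_real)
    define s1 where "s1 = sqrt (- T)"
    define s2 where "s2 = sqrt X"
    define w where "w = complex_of_real s1 *s x + complex_of_real s2 *s t"
    have s1sq: "s1^2 = -T" unfolding s1_def using Tn T_def by simp
    have s2sq: "s2^2 = X" unfolding s2_def using 3 by simp
    have "herm w w = complex_of_real (s1^2 * X + s2^2 * T)"
      unfolding w_def herm_ofreal_self ht hx xt tx by simp
    hence ww: "herm w w = 0" using s1sq s2sq by simp
    have "herm t w = complex_of_real (s2 * T)" unfolding w_def by (simp add: ht tx)
    moreover have "s2 * T \<noteq> 0" unfolding s2_def using 3 Tn T_def by simp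
    ultimately have w0: "w \<noteq> 0" by auto
    have vw: "herm v w = 0" unfolding w_def by (simp add: vx vt)
    have v0: "v \<noteq> 0" using vpos by auto
    show ?thesis using vV v0 w0 ww vw by blast
  qed
qed



lemma line_subspace: "subspace (range (\<lambda>c::complex. c *s (v::complex^'n)))"
  unfolding subspace_def
proof (intro conjI ballI allI impI)
  show "0 \<in> range (\<lambda>c. c *s v)" by (rule range_eqI[of _ _ 0]) simp
next
  fix a b assume "a \<in> range (\<lambda>c. c *s v)" "b \<in> range (\<lambda>c. c *s v)"
  then obtain c d where "a = c *s v" "b = d *s v" by auto
  thus "a + b \<in> range (\<lambda>c. c *s v)" by (intro range_eqI[of _ _ "c + d"]) (simp add: vector_sadd_rdistrib)
next
  fix r :: real and a assume "a \<in> range (\<lambda>c. c *s v)"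
  then obtain c where "a = c *s v" by auto
  thus "r *\<^sub>R a \<in> range (\<lambda>c. c *s v)"
    by (intro range_eqI[of _ _ "complex_of_real r * c"]) (simp add: scaleR_smult vector_smult_assoc)
qed

lemma line_Iso2:
  assumes v0: "v \<noteq> 0" and iso: "\<forall>a\<in>range (\<lambda>c. c *s v). \<forall>b\<in>range (\<lambda>c. c *s v). herm a b = 0"
  shows "range (\<lambda>c::complex. c *s (v::complex^('n::{finite,wellorder}))) \<in> Iso2"
proof -
  let ?L = "range (\<lambda>c::complex. c *s v)"
  let ?B = "{v, \<i> *s v}"
  have iv0: "\<i> *s v \<noteq> 0" using v0 by (simp add: vec_eq_iff)
  have ne: "v \<noteq> \<i> *s v"
  proof
    assume "v = \<i> *s v"
    hence "(1 - \<i>) *s v = 0" by (simp add: vector_sub_rdistrib)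
    thus False using v0 by (simp add: vec_eq_iff)
  qed
  have nsp: "v \<notin> span {\<i> *s v}"
  proof
    assume "v \<in> span {\<i> *s v}"
    then obtain k where "v = k *\<^sub>R (\<i> *s v)" by (auto simp: span_singleton)
    hence "v = (complex_of_real k * \<i>) *s v" by (simp add: scaleR_smult vector_smult_assoc)
    hence "(1 - complex_of_real k * \<i>) *s v = 0" by (simp add: vector_sub_rdistrib)
    moreover have "1 - complex_of_real k * \<i> \<noteq> 0"
      by (simp add: complex_eq_iff)
    ultimately show False using v0 by (simp add: vec_eq_iff)
  qed
  have ind: "independent ?B" using iv0 ne nsp by (simp add: independent_insert)
  have sub: "subspace ?L" by (rule line_subspace)
  have "span ?B \<subseteq> ?L" by (rule span_minimal) (use sub in \<open>auto intro: range_eqI[of _ _ 1] range_eqI[of _ _ \<i>]\<close>)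
  moreover have "?L \<subseteq> span ?B"
  proof
    fix a assume "a \<in> ?L"
    then obtain c where c: "a = c *s v" by auto
    have ceq: "c = complex_of_real (Re c) + complex_of_real (Im c) * \<i>" by (simp add: complex_eq_iff)
    have "Re c *\<^sub>R v + Im c *\<^sub>R (\<i> *s v) = (complex_of_real (Re c) + complex_of_real (Im c) * \<i>) *s v"
      by (simp only: scaleR_smult vector_smult_assoc vector_sadd_rdistrib)
    hence "c *s v = Re c *\<^sub>R v + Im c *\<^sub>R (\<i> *s v)" using ceq by simp
    moreover have "Re c *\<^sub>R v + Im c *\<^sub>R (\<i> *s v) \<in> span ?B"
      by (intro span_add span_scale span_base) auto
    ultimately show "a \<in> span ?B" using c by simp
  qed
  ultimately have Lsp: "?L = span ?B" by blast
  have "dim ?L = 2" unfolding Lsp using dim_span_eq_card_independent[OF ind] ne by simp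
  moreover have "omega_isotropic ?L"
  proof (unfold omega_isotropic_def omega_h_def, intro ballI)
    fix a b assume "a \<in> ?L" "b \<in> ?L"
    hence "herm a b = 0" using iso by blast
    thus "Im (herm a b) = 0" by simp
  qed
  ultimately show ?thesis using sub by (simp add: Iso2_def)
qed



lemma line_in_LimitSet:
  assumes "w \<noteq> 0" "herm w w = 0"
  shows "range (\<lambda>c::complex. c *s w) \<in> LimitSet"
  using assms unfolding LimitSet_def complex_lines_def by auto

lemma not_antipodal:
  assumes "p \<in> V" "p \<noteq> 0" "herm p w = 0"
  shows "\<not> antipodal V (range (\<lambda>c::complex. c *s w))"
proof
  assume "antipodal V (range (\<lambda>c::complex. c *s w))"
  hence "V \<inter> omega_perp (range (\<lambda>c::complex. c *s w)) = {0}"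
    by (simp add: antipodal_def direct_sum_UNIV_def)
  moreover have "p \<in> omega_perp (range (\<lambda>c::complex. c *s w))"
    using assms(3) by (auto simp: omega_perp_def omega_h_def)
  ultimately show False using assms(1,2) by blast
qed

lemma part3:
  fixes V :: "(complex^('n::{finite,wellorder})) set"
  assumes ne: "(idx_first::'n) \<noteq> idx_last" and VI: "V \<in> Iso2"
  shows "\<exists>p\<in>V. p \<noteq> 0 \<and> (\<exists>w. w \<noteq> 0 \<and> herm w w = 0 \<and> herm p w = 0)"
proof -
  have V: "subspace V" and d: "dim V = 2" and iso: "omega_isotropic V"
    using VI by (auto simp: Iso2_def)
  obtain B where B: "B \<subseteq> V" "independent B" "V \<subseteq> span B" "card B = dim V"
    by (rule basis_exists)
  obtain a b where ab: "B = {a, b}" "a \<noteq> b" using B(4) d by (auto simp: card_2_iff)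
  have aV: "a \<in> V" and bV: "b \<in> V" using B(1) ab by auto
  have a0: "a \<noteq> 0" using B(2) ab dependent_zero[of B] by auto
  have nsp: "b \<notin> span {a}"
  proof -
    have "independent (insert b {a})" using B(2) ab by (simp add: insert_commute)
    thus ?thesis using ab(2) by (simp add: independent_insert)
  qed
  define Hb where "Hb = Re (herm a b)"
  have hab: "herm a b = complex_of_real Hb" unfolding Hb_def
    using iso aV bV by (simp add: omega_isotropic_def omega_h_def complex_eq_iff)
  define A where "A = Re (herm a a)"
  have ha: "herm a a = complex_of_real A" unfolding A_def by (rule herm_self_real)
  define r where "r = Hb / A"
  define y where "y = b - r *\<^sub>R a"
  have yV: "y \<in> V" unfolding y_def using V aV bV by (simp add: subspace_diff subspace_scale)
  have y0: "y \<noteq> 0"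
  proof
    assume "y = 0"
    hence "b = r *\<^sub>R a" unfolding y_def by simp
    hence "b \<in> span {a}" by (simp add: span_mul span_base)
    thus False using nsp by simp
  qed
  have ay: "A \<noteq> 0 \<Longrightarrow> herm a y = 0"
    unfolding y_def scaleR_smult r_def by (simp add: ha hab)
  consider "A = 0" | "A > 0" | "A < 0" by linarith
  thus ?thesis
  proof cases
    case 1
    thus ?thesis using aV a0 ha by (intro bexI[of _ a]) auto
  next
    case 2
    show ?thesis by (rule main3[OF ne V aV yV y0]) (use 2 ha ay in simp)+
  next
    case 3
    have ypos: "Re (herm y y) > 0" by (rule timelike[of a y]) (use 3 A_def ay y0 in auto)
    have ya: "herm y a = 0" using ay 3 herm_sym[of a y] by simp
    show ?thesis by (rule main3[OF ne V yV aV a0 ypos ya])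
  qed
qed

lemma antip:
  fixes x y :: "complex^('n::{finite,wellorder})"
  assumes x0: "x \<noteq> 0" and y0: "y \<noteq> 0" and hx: "herm x x = 0" and hy: "herm y y = 0"
    and ne: "range (\<lambda>c::complex. c *s x) \<noteq> range (\<lambda>c::complex. c *s y)"
  shows "antipodal (range (\<lambda>c::complex. c *s x)) (range (\<lambda>c::complex. c *s y))"
proof -
  have hxy: "herm x y \<noteq> 0"
  proof
    assume "herm x y = 0"
    then obtain c where c: "x = c *s y" using null_dep[OF hx hy _ y0] by blast
    have c0: "c \<noteq> 0" using c x0 by auto
    have "range (\<lambda>d::complex. d *s x) = range (\<lambda>d::complex. d *s y)"
    proof
      show "range (\<lambda>d::complex. d *s x) \<subseteq> range (\<lambda>d::complex. d *s y)"
        using c by (auto simp: vector_smult_assoc)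
      show "range (\<lambda>d::complex. d *s y) \<subseteq> range (\<lambda>d::complex. d *s x)"
      proof
        fix z assume "z \<in> range (\<lambda>d::complex. d *s y)"
        then obtain d where "z = d *s y" by auto
        hence "z = (d / c) *s x" using c c0 by (simp add: vector_smult_assoc)
        thus "z \<in> range (\<lambda>d::complex. d *s x)" by auto
      qed
    qed
    thus False using ne by simp
  qed
  let ?L1 = "range (\<lambda>c::complex. c *s x)" and ?L2 = "range (\<lambda>c::complex. c *s y)"
  have I: "?L1 \<inter> omega_perp ?L2 = {0}"
  proof
    show "?L1 \<inter> omega_perp ?L2 \<subseteq> {0}"
    proof
      fix u assume u: "u \<in> ?L1 \<inter> omega_perp ?L2"
      then obtain c where c: "u = c *s x" by auto
      have m: "\<And>d. Im (herm u (d *s y)) = 0"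
        using u unfolding omega_perp_def omega_h_def by blast
      have hu: "\<And>d. herm u (d *s y) = d * (cnj c * herm x y)" using c by simp
      have "Im (1 * (cnj c * herm x y)) = 0" "Im (\<i> * (cnj c * herm x y)) = 0"
        using m[of 1] m[of "\<i>"] unfolding hu by blast+
      hence "cnj c * herm x y = 0" by (simp add: complex_eq_iff)
      hence "c = 0" using hxy by simp
      thus "u \<in> {0}" using c by simp
    qed
    show "{0} \<subseteq> ?L1 \<inter> omega_perp ?L2"
      by (auto simp: omega_perp_def omega_h_def intro: range_eqI[of _ _ 0])
  qed
  have S: "{p + q | p q. p \<in> ?L1 \<and> q \<in> omega_perp ?L2} = UNIV"
  proof (rule set_eqI, rule iffI)
    fix z :: "(complex,'n) vec"
    define a where "a = cnj (herm z y / herm x y)"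
    have "z - a *s x \<in> omega_perp ?L2"
    proof -
      have "herm (z - a *s x) y = 0" unfolding a_def using hxy by simp
      thus ?thesis by (auto simp: omega_perp_def omega_h_def)
    qed
    moreover have "a *s x \<in> ?L1" by auto
    ultimately show "z \<in> {p + q | p q. p \<in> ?L1 \<and> q \<in> omega_perp ?L2}"
      by (intro CollectI exI[of _ "a *s x"] exI[of _ "z - a *s x"]) auto
  qed simp
  show ?thesis unfolding antipodal_def direct_sum_UNIV_def using I S by blast
qed

theorem mainTheorem15:
  assumes "CARD('n::{finite,wellorder}) \<ge> 2"
  shows "maximally_antipodal (Iso2 :: (complex^('n::{finite,wellorder})) set set) LimitSet"
proof -
  have ne: "(idx_first::'n) \<noteq> idx_last" by (rule first_ne_last[OF assms])
  have P1: "LimitSet \<subseteq> (Iso2 :: ((complex,'n) vec) set set)"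
  proof
    fix L :: "((complex,'n) vec) set" assume "L \<in> LimitSet"
    then obtain v where v: "v \<noteq> 0" "L = range (\<lambda>c::complex. c *s v)"
      and iso: "\<forall>u\<in>L. \<forall>w\<in>L. herm u w = 0"
      by (auto simp: LimitSet_def complex_lines_def)
    show "L \<in> Iso2" using line_Iso2[of v] v iso by simp
  qed
  have P2: "\<forall>V\<in>(LimitSet :: ((complex,'n) vec) set set). \<forall>W\<in>LimitSet. V \<noteq> W \<longrightarrow> antipodal V W"
  proof (intro ballI impI)
    fix V W :: "((complex,'n) vec) set" assume VL: "V \<in> LimitSet" and WL: "W \<in> LimitSet" and "V \<noteq> W"
    from VL obtain x where x: "x \<noteq> 0" "V = range (\<lambda>c::complex. c *s x)" "\<forall>u\<in>V. \<forall>w\<in>V. herm u w = 0"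
      unfolding LimitSet_def complex_lines_def by blast
    from WL obtain y where y: "y \<noteq> 0" "W = range (\<lambda>c::complex. c *s y)" "\<forall>u\<in>W. \<forall>w\<in>W. herm u w = 0"
      unfolding LimitSet_def complex_lines_def by blast
    have "x \<in> V" "y \<in> W" using x(2) y(2) by (auto intro: range_eqI[of _ _ 1])
    hence "herm x x = 0" "herm y y = 0" using x(3) y(3) by auto
    thus "antipodal V W" using antip[of x y] x y \<open>V \<noteq> W\<close> by simp
  qed
  have P3: "\<forall>V\<in>(Iso2 :: ((complex,'n) vec) set set). \<exists>W\<in>LimitSet. \<not> antipodal V W"
  proof
    fix V :: "((complex,'n) vec) set" assume "V \<in> Iso2"
    then obtain p w where "p \<in> V" "p \<noteq> 0" "w \<noteq> 0" "herm w w = 0" "herm p w = 0"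
      using part3[OF ne] by blast
    thus "\<exists>W\<in>LimitSet. \<not> antipodal V W"
      using line_in_LimitSet not_antipodal by blast
  qed
  show ?thesis unfolding maximally_antipodal_def using P1 P2 P3 by blast
qed

end
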